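(* Let $G$ be a random $q\times q$ symmetric matrix which is almost surely positive definite, let $F(v)=\mathbb{E}\big[\sqrt{v^{\top}Gv}\big]$, and assume the relevant expectations are finite and differentiation in $v$ commutes with expectation. Then for every $v\in\mathbb{R}^q\setminus\{0\}$ the matrix $\tfrac12\mathrm{Hess}(F^2)(v)$ is positive definite, i.e. $w^{\top}\,\tfrac12\mathrm{Hess}(F^2)(v)\,w>0$ for all $w\in\mathbb{R}^q\setminus\{0\}$.
   Context: In the paper $G=J_f^{\top}J_f$ with $J_f$ the almost surely full rank $D\times q$ Jacobian of a stochastic immersion $f:\mathbb{R}^q\to\mathbb{R}^D$ at a fixed point. $\mathrm{Hess}$ is the Hessian with respect to $v$. *)

theory Defs
  imports "HOL-Probability.Probability"
begin

definition has_hessian :: "(real^'q \<Rightarrow> real) \<Rightarrow> real^'q^'q \<Rightarrow> real^'q \<Rightarrow> bool" where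
  "has_hessian f H v \<longleftrightarrow>
     (\<exists>g. (\<forall>\<^sub>F x in nhds v. (f has_derivative (\<lambda>w. g x \<bullet> w)) (at x)) \<and>
          (g has_derivative (\<lambda>w. H *v w)) (at v))"

definition outer :: "real^'q \<Rightarrow> real^'q \<Rightarrow> real^'q^'q" where
  "outer a b = (\<chi> i j. a $ i * b $ j)"

end

theory Submission
  imports Defs
begin


lemma outer_mult: "outer a b *v w = (b \<bullet> w) *\<^sub>R (a::real^'q)"
  by (simp add: outer_def vec_eq_iff matrix_vector_mult_def inner_vec_def sum_distrib_left mult_ac)

lemma sym_inner: assumes "transpose (A::real^'q^'q) = A" shows "w \<bullet> (A *v x) = x \<bullet> (A *v w)"
proof -
  have "w \<bullet> (A *v x) = (w v* A) \<bullet> x" by (simp add: dot_lmul_matrix)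
  also have "\<dots> = (transpose A *v w) \<bullet> x" by (metis vector_transpose_matrix transpose_transpose)
  finally show ?thesis using assms by (simp add: inner_commute)
qed

lemma quad_expand:
  fixes A :: "real^'q^'q"
  assumes "transpose A = A"
  shows "(w - t *\<^sub>R v) \<bullet> (A *v (w - t *\<^sub>R v)) = w \<bullet> (A *v w) - 2 * t * (v \<bullet> (A *v w)) + t^2 * (v \<bullet> (A *v v))"
proof -
  have s: "w \<bullet> (A *v v) = v \<bullet> (A *v w)" using sym_inner[OF assms] .
  show ?thesis
    by (simp add: matrix_vector_mult_diff_distrib matrix_vector_mult_scaleR inner_diff_left inner_diff_right s power2_eq_square algebra_simps)
qed

lemma pointwise_pos:
  fixes A :: "real^'q^'q"
  assumes sym: "transpose A = A" and pd: "\<forall>x. x \<noteq> 0 \<longrightarrow> x \<bullet> (A *v x) > 0"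
    and v: "v \<noteq> 0" and np: "\<not> (\<exists>c. w = c *\<^sub>R v)"
  shows "w \<bullet> (((1 / sqrt (v \<bullet> (A *v v))) *\<^sub>R A - (1 / sqrt (v \<bullet> (A *v v)) ^ 3) *\<^sub>R outer (A *v v) (A *v v)) *v w) > 0"
proof -
  define p where "p = v \<bullet> (A *v v)"
  define r where "r = v \<bullet> (A *v w)"
  define q where "q = w \<bullet> (A *v w)"
  have p: "p > 0" using pd v p_def by auto
  have rr: "(A *v v) \<bullet> w = r" using sym_inner[OF sym, of w v] unfolding r_def by (simp add: inner_commute)
  have rr': "w \<bullet> (A *v v) = r" using sym_inner[OF sym, of w v] unfolding r_def by simp
  have "w - (r/p) *\<^sub>R v \<noteq> 0" using np by auto
  hence "(w - (r/p) *\<^sub>R v) \<bullet> (A *v (w - (r/p) *\<^sub>R v)) > 0" using pd by blast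
  hence "q - 2*(r/p)*r + (r/p)^2 * p > 0" using quad_expand[OF sym, of w "r/p" v] unfolding p_def q_def r_def by simp
  hence "q - r^2/p > 0" using p by (simp add: power2_eq_square field_simps)
  hence h: "q * p - r^2 > 0" using p by (simp add: field_simps)
  define s where "s = sqrt p"
  have s: "s > 0" "s^2 = p" using p s_def by auto
  have "w \<bullet> (((1 / s) *\<^sub>R A - (1 / s ^ 3) *\<^sub>R outer (A *v v) (A *v v)) *v w) = q / s - r^2 / s^3"
    by (simp add: matrix_vector_mult_diff_rdistrib outer_mult inner_diff_right q_def rr rr'
        flip: scaleR_matrix_vector_assoc) (simp add: power2_eq_square divide_inverse)
  also have "\<dots> = (q * p - r^2) / s^3" using s(1) unfolding s(2)[symmetric]
    by (simp add: field_simps power3_eq_cube power2_eq_square)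
  also have "\<dots> > 0" using h s by simp
  finally show ?thesis unfolding s_def p_def by simp
qed

lemma pointwise_par:
  fixes A :: "real^'q^'q"
  assumes pd: "\<forall>x. x \<noteq> 0 \<longrightarrow> x \<bullet> (A *v x) > 0" and v: "v \<noteq> 0"
  shows "w \<bullet> (((1 / sqrt (v \<bullet> (A *v v))) *\<^sub>R A - (1 / sqrt (v \<bullet> (A *v v)) ^ 3) *\<^sub>R outer (A *v v) (A *v v)) *v (c *\<^sub>R v)) = 0"
proof -
  define p where "p = v \<bullet> (A *v v)"
  have p: "p > 0" using pd v p_def by auto
  define s where "s = sqrt p"
  have s: "s > 0" "s^2 = p" using p s_def by auto
  have "((1 / s) *\<^sub>R A - (1 / s ^ 3) *\<^sub>R outer (A *v v) (A *v v)) *v (c *\<^sub>R v)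
     = c *\<^sub>R ((1/s - p / s^3) *\<^sub>R (A *v v))"
    by (simp add: matrix_vector_mult_diff_rdistrib outer_mult matrix_vector_mult_scaleR p_def
        flip: scaleR_matrix_vector_assoc) (simp add: algebra_simps inner_commute)
  also have "1/s - p/s^3 = 0" using s p by (simp add: field_simps power3_eq_cube power2_eq_square)
  finally show ?thesis unfolding s_def p_def by simp
qed

lemma int_pos:
  fixes f :: "_ \<Rightarrow> real"
  assumes "prob_space M" "integrable M f" "AE x in M. 0 < f x"
  shows "integral\<^sup>L M f > 0"
proof -
  have ge: "integral\<^sup>L M f \<ge> 0" using assms by (auto intro!: integral_nonneg_AE elim: AE_mp)
  have "integral\<^sup>L M f \<noteq> 0"
  proof
    assume "integral\<^sup>L M f = 0"
    have nn: "AE x in M. 0 \<le> f x" using assms(3) by eventually_elim simp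
    have z: "AE x in M. f x = 0" using integral_nonneg_eq_0_iff_AE[OF assms(2) nn] \<open>integral\<^sup>L M f = 0\<close> by simp
    have "AE x in M. False" using z assms(3) by eventually_elim simp
    thus False using prob_space.AE_False[OF assms(1)] by simp
  qed
  with ge show ?thesis by simp
qed

theorem mainTheorem3:
  fixes M :: "'a measure" and G :: "'a \<Rightarrow> real^'q^'q" and F :: "real^'q \<Rightarrow> real"
  assumes prob: "prob_space M"
    and G_meas: "G \<in> borel_measurable M"
    and G_sym_pd: "AE \<omega> in M. transpose (G \<omega>) = G \<omega> \<and>
                      (\<forall>x. x \<noteq> 0 \<longrightarrow> x \<bullet> (G \<omega> *v x) > 0)"
    and F_def: "\<And>x. F x = (\<integral>\<omega>. sqrt (x \<bullet> (G \<omega> *v x)) \<partial>M)"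
    \<comment> \<open>finiteness of the relevant expectations\<close>
    and int0: "\<And>x. x \<noteq> 0 \<Longrightarrow> integrable M (\<lambda>\<omega>. sqrt (x \<bullet> (G \<omega> *v x)))"
    and int1: "\<And>x. x \<noteq> 0 \<Longrightarrow>
                 integrable M (\<lambda>\<omega>. (1 / sqrt (x \<bullet> (G \<omega> *v x))) *\<^sub>R (G \<omega> *v x))"
    and int2: "\<And>x. x \<noteq> 0 \<Longrightarrow>
                 integrable M (\<lambda>\<omega>. (1 / sqrt (x \<bullet> (G \<omega> *v x))) *\<^sub>R G \<omega>
                    - (1 / sqrt (x \<bullet> (G \<omega> *v x)) ^ 3) *\<^sub>R outer (G \<omega> *v x) (G \<omega> *v x))"
    \<comment> \<open>differentiation in v commutes with expectation (first and second order)\<close>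
    and diff1: "\<And>x. x \<noteq> 0 \<Longrightarrow>
                 (F has_derivative (\<lambda>w. (\<integral>\<omega>. (1 / sqrt (x \<bullet> (G \<omega> *v x))) *\<^sub>R (G \<omega> *v x) \<partial>M) \<bullet> w)) (at x)"
    and diff2: "\<And>x. x \<noteq> 0 \<Longrightarrow>
                 ((\<lambda>y. \<integral>\<omega>. (1 / sqrt (y \<bullet> (G \<omega> *v y))) *\<^sub>R (G \<omega> *v y) \<partial>M) has_derivative
                   (\<lambda>w. (\<integral>\<omega>. (1 / sqrt (x \<bullet> (G \<omega> *v x))) *\<^sub>R G \<omega>
                    - (1 / sqrt (x \<bullet> (G \<omega> *v x)) ^ 3) *\<^sub>R outer (G \<omega> *v x) (G \<omega> *v x) \<partial>M) *v w)) (at x)"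
    and v_ne: "v \<noteq> 0"
  shows "(\<exists>H. has_hessian (\<lambda>x. (F x)\<^sup>2) H v) \<and>
         (\<forall>H. has_hessian (\<lambda>x. (F x)\<^sup>2) H v \<longrightarrow>
              (\<forall>w. w \<noteq> 0 \<longrightarrow> w \<bullet> (((1/2) *\<^sub>R H) *v w) > 0))"
proof -
  interpret P: prob_space M by (rule prob)
  define s where "s x \<omega> = sqrt (x \<bullet> (G \<omega> *v x))" for x \<omega>
  define a where "a x = (\<integral>\<omega>. (1 / s x \<omega>) *\<^sub>R (G \<omega> *v x) \<partial>M)" for x
  define Bw where "Bw \<omega> = (1 / s v \<omega>) *\<^sub>R G \<omega> - (1 / s v \<omega> ^ 3) *\<^sub>R outer (G \<omega> *v v) (G \<omega> *v v)" for \<omega>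
  define B where "B = (\<integral>\<omega>. Bw \<omega> \<partial>M)"
  define g where "g x = (2 * F x) *\<^sub>R a x" for x
  define H0 where "H0 = 2 *\<^sub>R (F v *\<^sub>R B + outer (a v) (a v))"
  have ev: "\<forall>\<^sub>F x in nhds v. x \<noteq> 0" by (rule t1_space_nhds) (rule v_ne)
  have diff1': "(F has_derivative (\<lambda>w. a x \<bullet> w)) (at x)" if "x \<noteq> 0" for x
    unfolding a_def s_def using diff1[OF that] .
  have diff2': "(a has_derivative (\<lambda>w. B *v w)) (at v)"
    unfolding a_def B_def Bw_def s_def using diff2[OF v_ne] .
  have gradF2: "((\<lambda>x. (F x)\<^sup>2) has_derivative (\<lambda>w. g x \<bullet> w)) (at x)" if x: "x \<noteq> 0" for x
  proof -
    have "((\<lambda>x. F x * F x) has_derivative (\<lambda>w. F x * (a x \<bullet> w) + (a x \<bullet> w) * F x)) (at x)"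
      by (rule has_derivative_mult[OF diff1'[OF x] diff1'[OF x]])
    moreover have "(\<lambda>x. (F x)\<^sup>2) = (\<lambda>x. F x * F x)" by (simp add: power2_eq_square)
    ultimately show ?thesis
      by (auto elim!: has_derivative_eq_rhs simp: fun_eq_iff g_def algebra_simps)
  qed
  have gradg: "(g has_derivative (\<lambda>w. H0 *v w)) (at v)"
    unfolding g_def
    by (rule has_derivative_eq_rhs[OF has_derivative_scaleR[OF has_derivative_mult[OF has_derivative_const diff1'[OF v_ne]] diff2']])
      (simp add: fun_eq_iff H0_def outer_mult matrix_vector_mult_add_rdistrib algebra_simps
        flip: scaleR_matrix_vector_assoc)
  have ex: "has_hessian (\<lambda>x. (F x)\<^sup>2) H0 v"
    unfolding has_hessian_def
    by (intro exI[of _ g] conjI gradg eventually_mono[OF ev gradF2])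
  have uniq: "H *v w = H0 *v w" if hH: "has_hessian (\<lambda>x. (F x)\<^sup>2) H v" for H w
  proof -
    from hH obtain g' where e: "\<forall>\<^sub>F x in nhds v. ((\<lambda>x. (F x)\<^sup>2) has_derivative (\<lambda>w. g' x \<bullet> w)) (at x)"
      and dg': "(g' has_derivative (\<lambda>w. H *v w)) (at v)"
      unfolding has_hessian_def by blast
    have "\<forall>\<^sub>F x in nhds v. g' x = g x"
      using eventually_conj[OF ev e]
    proof (rule eventually_mono)
      fix x assume "x \<noteq> 0 \<and> ((\<lambda>x. (F x)\<^sup>2) has_derivative (\<lambda>w. g' x \<bullet> w)) (at x)"
      hence "(\<lambda>w. g' x \<bullet> w) = (\<lambda>w. g x \<bullet> w)"
        using gradF2 has_derivative_unique by blast
      hence "(g' x - g x) \<bullet> (g' x - g x) = 0"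
        by (metis inner_diff_left inner_diff_right diff_self)
      thus "g' x = g x" by simp
    qed
    hence e2: "\<forall>\<^sub>F x in nhds v. g' x = g x" .
    have "g' v = g v" using eventually_nhds_x_imp_x[OF e2] .
    moreover have "\<forall>\<^sub>F x in at v. g' x = g x" using e2
      by (simp add: eventually_at_filter eventually_mono)
    ultimately have "(g has_derivative (\<lambda>w. H *v w)) (at v)"
      using has_derivative_transform_eventually[OF dg', of g] by simp
    hence "(\<lambda>w. H *v w) = (\<lambda>w. H0 *v w)" using gradg has_derivative_unique by blast
    thus ?thesis by meson
  qed
  have AEv: "AE \<omega> in M. transpose (G \<omega>) = G \<omega> \<and> (\<forall>x. x \<noteq> 0 \<longrightarrow> x \<bullet> (G \<omega> *v x) > 0)"
    by (rule G_sym_pd)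
  have Fv: "F v = (\<integral>\<omega>. s v \<omega> \<partial>M)" unfolding F_def s_def ..
  have Fpos: "F v > 0"
    unfolding Fv
  proof (rule int_pos[OF prob])
    show "integrable M (s v)" unfolding s_def using int0[OF v_ne] .
    show "AE x in M. 0 < s v x" using AEv
      by (rule AE_mp) (auto simp: s_def v_ne intro!: AE_I2)
  qed
  have intB: "integrable M Bw" unfolding Bw_def s_def using int2[OF v_ne] .
  have intA: "integrable M (\<lambda>\<omega>. (1 / s v \<omega>) *\<^sub>R (G \<omega> *v v))" unfolding s_def using int1[OF v_ne] .
  have linQ: "bounded_linear (\<lambda>A::real^'q^'q. w \<bullet> (A *v w))" for w
    unfolding linear_conv_bounded_linear[symmetric]
    by (rule linearI) (simp_all add: matrix_vector_mult_add_rdistrib inner_add_right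
        flip: scaleR_matrix_vector_assoc)
  have Bq: "w \<bullet> (B *v w) = (\<integral>\<omega>. w \<bullet> (Bw \<omega> *v w) \<partial>M)" for w
    unfolding B_def using integral_bounded_linear[OF linQ intB, of w] by simp
  have intBq: "integrable M (\<lambda>\<omega>. w \<bullet> (Bw \<omega> *v w))" for w
    using integrable_bounded_linear[OF linQ intB] .
  have av: "a v \<bullet> w = (\<integral>\<omega>. ((1 / s v \<omega>) *\<^sub>R (G \<omega> *v v)) \<bullet> w \<partial>M)" for w
    unfolding a_def using integral_bounded_linear[OF bounded_linear_inner_left intA, of w] by simp
  have Bnn: "AE \<omega> in M. w \<bullet> (Bw \<omega> *v w) \<ge> 0" for w using AEv
  proof (rule AE_mp, intro AE_I2 impI)
    fix \<omega> assume h: "transpose (G \<omega>) = G \<omega> \<and> (\<forall>x. x \<noteq> 0 \<longrightarrow> x \<bullet> (G \<omega> *v x) > 0)"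
    show "w \<bullet> (Bw \<omega> *v w) \<ge> 0"
    proof (cases "\<exists>c. w = c *\<^sub>R v")
      case True
      then obtain c where c: "w = c *\<^sub>R v" by blast
      have "w \<bullet> (Bw \<omega> *v (c *\<^sub>R v)) = 0"
        unfolding Bw_def s_def using pointwise_par[of "G \<omega>" v w c] h v_ne by blast
      hence "w \<bullet> (Bw \<omega> *v w) = 0" using c by metis
      thus ?thesis by simp
    next
      case False
      thus ?thesis using pointwise_pos[of "G \<omega>" v w] h v_ne unfolding Bw_def s_def by simp
    qed
  qed
  have key: "w \<bullet> ((1/2) *\<^sub>R H0 *v w) = F v * (w \<bullet> (B *v w)) + (a v \<bullet> w)^2" for w
    by (simp add: H0_def outer_mult matrix_vector_mult_add_rdistrib inner_add_right power2_eq_square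
        inner_commute[of w] flip: scaleR_matrix_vector_assoc)
  have pos: "w \<bullet> ((1/2) *\<^sub>R H0 *v w) > 0" if w: "w \<noteq> 0" for w
  proof (cases "\<exists>c. w = c *\<^sub>R v")
    case True
    then obtain c where c: "w = c *\<^sub>R v" by blast
    with w have c0: "c \<noteq> 0" by auto
    have "a v \<bullet> v = (\<integral>\<omega>. s v \<omega> \<partial>M)"
      unfolding av
    proof (rule integral_cong_AE)
      show "(\<lambda>\<omega>. ((1 / s v \<omega>) *\<^sub>R (G \<omega> *v v)) \<bullet> v) \<in> borel_measurable M"
        using integrable_bounded_linear[OF bounded_linear_inner_left intA, of v] by simp
      show "s v \<in> borel_measurable M" unfolding s_def using int0[OF v_ne] by simp
      show "AE \<omega> in M. ((1 / s v \<omega>) *\<^sub>R (G \<omega> *v v)) \<bullet> v = s v \<omega>" using AEv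
      proof (rule AE_mp, intro AE_I2 impI)
        fix \<omega> assume h: "transpose (G \<omega>) = G \<omega> \<and> (\<forall>x. x \<noteq> 0 \<longrightarrow> x \<bullet> (G \<omega> *v x) > 0)"
        hence p: "v \<bullet> (G \<omega> *v v) > 0" using v_ne by blast
        have "((1 / s v \<omega>) *\<^sub>R (G \<omega> *v v)) \<bullet> v = (v \<bullet> (G \<omega> *v v)) / sqrt (v \<bullet> (G \<omega> *v v))"
          by (simp add: s_def inner_commute)
        also have "\<dots> = s v \<omega>" using p unfolding s_def
          by (metis real_div_sqrt less_imp_le)
        finally show "((1 / s v \<omega>) *\<^sub>R (G \<omega> *v v)) \<bullet> v = s v \<omega>" .
      qed
    qed
    hence "a v \<bullet> w = c * F v" using c Fv by simp
    hence sq: "(a v \<bullet> w)^2 > 0" using c0 Fpos by simp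
    have "w \<bullet> (B *v w) \<ge> 0" unfolding Bq by (rule integral_nonneg_AE[OF Bnn])
    hence "F v * (w \<bullet> (B *v w)) \<ge> 0" using Fpos by simp
    with sq show ?thesis unfolding key by (simp only: add_nonneg_pos)
  next
    case False
    have "w \<bullet> (B *v w) > 0" unfolding Bq
    proof (rule int_pos[OF prob intBq])
      show "AE \<omega> in M. 0 < w \<bullet> (Bw \<omega> *v w)" using AEv
        by (rule AE_mp) (intro AE_I2 impI, use pointwise_pos[of _ v w] False v_ne in \<open>auto simp: Bw_def s_def\<close>)
    qed
    hence "F v * (w \<bullet> (B *v w)) > 0" using Fpos by simp
    thus ?thesis unfolding key by (simp add: add_pos_nonneg)
  qed
  show ?thesis
  proof (intro conjI allI impI)
    show "\<exists>H. has_hessian (\<lambda>x. (F x)\<^sup>2) H v" using ex by blast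
  next
    fix H :: "real^'q^'q" and w :: "real^'q" assume hH: "has_hessian (\<lambda>x. (F x)\<^sup>2) H v" and w: "w \<noteq> 0"
    have "((1/2) *\<^sub>R H) *v w = ((1/2) *\<^sub>R H0) *v w"
      using uniq[OF hH, of w] by (simp flip: scaleR_matrix_vector_assoc)
    thus "w \<bullet> (((1/2) *\<^sub>R H) *v w) > 0" using pos[OF w] by simp
  qed
qed

end
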